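(* Let $\vec u,\vec v$ be disjoint lists of $n$ Boolean variables and $\vec a$ a list of auxiliary variables, and let $\mathcal{O}(\vec u,\vec v,\vec a)$ and $\mathcal{S}(\vec u,\vec v,\vec a)$ be pseudo-Boolean formulas such that $\mathcal{S}$ is a specification over $\vec a$. Suppose that there are cutting planes derivations showing (i) $\mathcal{S}(\vec x,\vec x,\vec a)\vdash\mathcal{O}(\vec x,\vec x,\vec a)$, and (ii) $\mathcal{S}(\vec x,\vec y,\vec a)\cup\mathcal{O}(\vec x,\vec y,\vec a)\cup\mathcal{S}(\vec y,\vec z,\vec b)\cup\mathcal{O}(\vec y,\vec z,\vec b)\cup\mathcal{S}(\vec x,\vec z,\vec c)\vdash\mathcal{O}(\vec x,\vec z,\vec c)$, where $\vec x,\vec y,\vec z$ are lists of $n$ variables and $\vec a,\vec b,\vec c$ are lists of fresh variables of the size of $\vec a$ (all pairwise disjoint). Then the relation $\preceq$ defined by $\mathcal{O}$ and $\mathcal{S}$ is a preorder (reflexive and transitive).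
   Context: PB constraints, formulas, substitutions, $\vdash$ (cutting planes derivability, which is sound) are as usual: a literal is $x$ or $\bar x=1-x$, a PB constraint is $\sum_i a_i\ell_i\ge A$ with negation $\sum_i a_i\bar\ell_i\ge\sum_i a_i-A+1$; for a formula $F(\vec u)$ and a list of literals/truth values $\vec w$ of equal length, $F(\vec w)$ denotes $F$ with each $u_i$ replaced by $w_i$. A formula $\mathcal{S}(\vec x,\vec a)=\{C_1,\dots,C_m\}$ is a specification over $\vec a$ if there are substitutions $\omega_1,\dots,\omega_m$ with $\mathrm{supp}(\omega_i)=\{x:\omega_i(x)\ne x\}\subseteq\vec a$ such that for each $i$, $\{C_1,\dots,C_{i-1},\neg C_i\}\vdash\{C_1{\upharpoonright}_{\omega_i},\dots,C_i{\upharpoonright}_{\omega_i}\}$. Relation defined by $\mathcal{O},\mathcal{S}$: for a list $\vec w$ of $n$ variables disjoint from $\vec a$ and total assignments $\alpha,\beta$ to $\vec w$, $\alpha\preceq\beta$ holds iff there exists an assignment $\rho$ to $\vec a$ such that $\mathcal{S}(\vec w{\upharpoonright}_\alpha,\vec w{\upharpoonright}_\beta,\vec a{\upharpoonright}_\rho)\wedge\mathcal{O}(\vec w{\upharpoonright}_\alpha,\vec w{\upharpoonright}_\beta,\vec a{\upharpoonright}_\rho)$ evaluates to true, where $\vec w{\upharpoonright}_\alpha$ denotes the list of values $\alpha(w_1),\dots,\alpha(w_n)$. *)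

theory Defs
  imports Main
begin

datatype 'v lit = Pos 'v | Neg 'v

fun var_of :: "'v lit \<Rightarrow> 'v" where
  "var_of (Pos x) = x" | "var_of (Neg x) = x"

fun neg_lit :: "'v lit \<Rightarrow> 'v lit" where
  "neg_lit (Pos x) = Neg x" | "neg_lit (Neg x) = Pos x"

datatype 'v pbc = PBC "(int \<times> 'v lit) list" int

type_synonym 'v formula = "'v pbc list"

fun lit_val :: "('v \<Rightarrow> bool) \<Rightarrow> 'v lit \<Rightarrow> int" where
  "lit_val \<tau> (Pos x) = (if \<tau> x then 1 else 0)"
| "lit_val \<tau> (Neg x) = (if \<tau> x then 0 else 1)"

fun sat_pbc :: "('v \<Rightarrow> bool) \<Rightarrow> 'v pbc \<Rightarrow> bool" where
  "sat_pbc \<tau> (PBC ts A) = ((\<Sum>(a,l)\<leftarrow>ts. a * lit_val \<tau> l) \<ge> A)"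

definition sat_formula :: "('v \<Rightarrow> bool) \<Rightarrow> 'v formula \<Rightarrow> bool" where
  "sat_formula \<tau> F = (\<forall>C\<in>set F. sat_pbc \<tau> C)"

fun vars_pbc :: "'v pbc \<Rightarrow> 'v set" where
  "vars_pbc (PBC ts A) = var_of ` snd ` set ts"

definition vars_formula :: "'v formula \<Rightarrow> 'v set" where
  "vars_formula F = (\<Union>C\<in>set F. vars_pbc C)"

fun neg_pbc :: "'v pbc \<Rightarrow> 'v pbc" where
  "neg_pbc (PBC ts A) = PBC (map (\<lambda>(a,l). (a, neg_lit l)) ts) ((\<Sum>(a,l)\<leftarrow>ts. a) - A + 1)"

text \<open>Affine normal form: coefficient of each variable, and the right-hand side after
  moving the constant parts of negative literals (x-bar = 1 - x) to the right.\<close>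
fun lin_coeff :: "'v pbc \<Rightarrow> 'v \<Rightarrow> int" where
  "lin_coeff (PBC ts A) x =
     (\<Sum>(a,l)\<leftarrow>ts. (case l of Pos y \<Rightarrow> if y = x then a else 0
                         | Neg y \<Rightarrow> if y = x then - a else 0))"

fun lin_rhs :: "'v pbc \<Rightarrow> int" where
  "lin_rhs (PBC ts A) = A - (\<Sum>(a,l)\<leftarrow>ts. (case l of Pos y \<Rightarrow> 0 | Neg y \<Rightarrow> a))"

inductive cp_derivable :: "'v pbc set \<Rightarrow> 'v pbc \<Rightarrow> bool" for F where
  cp_input: "C \<in> F \<Longrightarrow> cp_derivable F C"
| cp_lit_axiom: "cp_derivable F (PBC [(1, l)] 0)"
| cp_add: "cp_derivable F (PBC ts1 A1) \<Longrightarrow> cp_derivable F (PBC ts2 A2) \<Longrightarrow>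
     cp_derivable F (PBC (ts1 @ ts2) (A1 + A2))"
| cp_mult: "cp_derivable F (PBC ts A) \<Longrightarrow> c > 0 \<Longrightarrow>
     cp_derivable F (PBC (map (\<lambda>(a,l). (c * a, l)) ts) (c * A))"
| cp_div: "cp_derivable F (PBC ts A) \<Longrightarrow> d > 0 \<Longrightarrow> (\<forall>(a,l)\<in>set ts. a \<ge> 0) \<Longrightarrow>
     cp_derivable F (PBC (map (\<lambda>(a,l). (- ((- a) div d), l)) ts) (- ((- A) div d)))"
| cp_normalize: "cp_derivable F C \<Longrightarrow> lin_coeff D = lin_coeff C \<Longrightarrow> lin_rhs D \<le> lin_rhs C \<Longrightarrow>
     cp_derivable F D"

definition cp_derives :: "'v formula \<Rightarrow> 'v formula \<Rightarrow> bool" (infix "\<turnstile>cp" 50) where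
  "F \<turnstile>cp G = (\<forall>C\<in>set G. cp_derivable (set F) C)"

datatype 'v sterm = SLit "'v lit" | SVal bool

type_synonym 'v subst = "'v \<Rightarrow> 'v sterm"

definition supp :: "'v subst \<Rightarrow> 'v set" where
  "supp \<omega> = {x. \<omega> x \<noteq> SLit (Pos x)}"

fun neg_sterm :: "'v sterm \<Rightarrow> 'v sterm" where
  "neg_sterm (SLit l) = SLit (neg_lit l)" | "neg_sterm (SVal b) = SVal (\<not> b)"

fun subst_lit :: "'v subst \<Rightarrow> 'v lit \<Rightarrow> 'v sterm" where
  "subst_lit \<omega> (Pos x) = \<omega> x" | "subst_lit \<omega> (Neg x) = neg_sterm (\<omega> x)"

fun restrict :: "'v pbc \<Rightarrow> 'v subst \<Rightarrow> 'v pbc" where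
  "restrict (PBC ts A) \<omega> =
     PBC (concat (map (\<lambda>(a,l). case subst_lit \<omega> l of SLit l' \<Rightarrow> [(a, l')] | SVal _ \<Rightarrow> []) ts))
         (A - (\<Sum>(a,l)\<leftarrow>ts. case subst_lit \<omega> l of SVal True \<Rightarrow> a | _ \<Rightarrow> 0))"

definition subst_of :: "'v list \<Rightarrow> 'v sterm list \<Rightarrow> 'v subst" where
  "subst_of us ws x = (case map_of (zip us ws) x of Some t \<Rightarrow> t | None \<Rightarrow> SLit (Pos x))"

definition inst :: "'v formula \<Rightarrow> 'v list \<Rightarrow> 'v sterm list \<Rightarrow> 'v formula" where
  "inst F us ws = map (\<lambda>C. restrict C (subst_of us ws)) F"

definition vlits :: "'v list \<Rightarrow> 'v sterm list" where
  "vlits xs = map (\<lambda>x. SLit (Pos x)) xs"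

definition vals :: "('v \<Rightarrow> bool) \<Rightarrow> 'v list \<Rightarrow> 'v sterm list" where
  "vals \<alpha> xs = map (\<lambda>x. SVal (\<alpha> x)) xs"

definition is_specification :: "'v formula \<Rightarrow> 'v list \<Rightarrow> bool" where
  "is_specification S as =
     (\<exists>\<omega>s. length \<omega>s = length S \<and>
        (\<forall>i < length S. supp (\<omega>s ! i) \<subseteq> set as \<and>
           (take i S @ [neg_pbc (S ! i)]) \<turnstile>cp map (\<lambda>C. restrict C (\<omega>s ! i)) (take (Suc i) S)))"

text \<open>A formula with all variables replaced by truth values "evaluates to true".
  (Its truth value does not depend on the assignment.)\<close>
definition evaluates_true :: "'v formula \<Rightarrow> bool" where
  "evaluates_true F = (\<forall>\<tau>. sat_formula \<tau> F)"

text \<open>alpha <= beta for the relation defined by O, S (formulas over us, vs, as), on assignments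
  to the variable list ws.\<close>
definition rel_OS :: "'v formula \<Rightarrow> 'v formula \<Rightarrow> 'v list \<Rightarrow> 'v list \<Rightarrow> 'v list \<Rightarrow> 'v list
                     \<Rightarrow> ('v \<Rightarrow> bool) \<Rightarrow> ('v \<Rightarrow> bool) \<Rightarrow> bool" where
  "rel_OS Ob S us vs as ws \<alpha> \<beta> =
     (\<exists>\<rho>. evaluates_true
            (inst S (us @ vs @ as) (vals \<alpha> ws @ vals \<beta> ws @ vals \<rho> as) @
             inst Ob (us @ vs @ as) (vals \<alpha> ws @ vals \<beta> ws @ vals \<rho> as)))"

end

theory Submission
  imports Defs
begin

definition sval :: "('v \<Rightarrow> bool) \<Rightarrow> 'v sterm \<Rightarrow> bool" where
  "sval \<tau> t = (case t of SLit l \<Rightarrow> lit_val \<tau> l = 1 | SVal b \<Rightarrow> b)"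

lemma lit_val_01: "lit_val \<tau> l = 0 \<or> lit_val \<tau> l = 1"
  by (cases l) auto

lemma lit_val_neg: "lit_val \<tau> (neg_lit l) = 1 - lit_val \<tau> l"
  by (cases l) auto

lemma sval_neg: "sval \<tau> (neg_sterm t) = (\<not> sval \<tau> t)"
  apply (cases t) apply (auto simp: sval_def lit_val_neg)
  using lit_val_01 by (metis diff_self eq_diff_eq zero_neq_one add_0)+

lemma lit_val_comp: "lit_val (\<lambda>x. sval \<tau> (\<omega> x)) l =
   (case subst_lit \<omega> l of SLit l' \<Rightarrow> lit_val \<tau> l' | SVal b \<Rightarrow> (if b then 1 else 0))"
proof -
  have A: "lit_val (\<lambda>x. sval \<tau> (\<omega> x)) l = (if sval \<tau> (subst_lit \<omega> l) then 1 else 0)"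
    by (cases l) (simp_all add: sval_neg)
  show ?thesis unfolding A
    apply (cases "subst_lit \<omega> l") apply (simp_all add: sval_def)
    using lit_val_01 by force
qed

lemma restrict_sum: "(\<Sum>(a,l)\<leftarrow>concat (map (\<lambda>(a,l). case subst_lit \<omega> l of SLit l' \<Rightarrow> [(a, l')] | SVal _ \<Rightarrow> []) ts). a * lit_val \<tau> l)
  + (\<Sum>(a,l)\<leftarrow>ts. case subst_lit \<omega> l of SVal True \<Rightarrow> a | _ \<Rightarrow> 0)
  = (\<Sum>(a,l)\<leftarrow>ts. a * lit_val (\<lambda>x. sval \<tau> (\<omega> x)) l)"
proof (induction ts)
  case Nil then show ?case by simp
next
  case (Cons p ts)
  obtain a l where p: "p = (a,l)" by fastforce
  show ?case using Cons.IH unfolding p lit_val_comp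
    by (cases "subst_lit \<omega> l") (auto simp: algebra_simps)
qed

lemma sat_restrict: "sat_pbc \<tau> (restrict C \<omega>) = sat_pbc (\<lambda>x. sval \<tau> (\<omega> x)) C"
proof (cases C)
  case (PBC ts A)
  show ?thesis using restrict_sum[where ts=ts and \<omega>=\<omega> and \<tau>=\<tau>] by (simp add: PBC) linarith
qed


lemma sat_vars: "(\<forall>x\<in>vars_pbc C. \<tau> x = \<tau>' x) \<Longrightarrow> sat_pbc \<tau> C = sat_pbc \<tau>' C"
proof (cases C)
  case (PBC ts A)
  assume h: "\<forall>x\<in>vars_pbc C. \<tau> x = \<tau>' x"
  have "\<forall>x\<in>var_of ` snd ` set ts. \<tau> x = \<tau>' x" using h PBC by simp
  then have "(\<Sum>(a,l)\<leftarrow>ts. a * lit_val \<tau> l) = (\<Sum>(a,l)\<leftarrow>ts. a * lit_val \<tau>' l)"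
  proof (induction ts)
    case (Cons p ts)
    obtain a l where p: "p = (a,l)" by fastforce
    have "lit_val \<tau> l = lit_val \<tau>' l" using Cons.prems p by (cases l) auto
    then show ?case using Cons p by auto
  qed simp
  then show ?thesis using PBC by simp
qed

lemma sat_neg: "\<not> sat_pbc \<tau> C \<Longrightarrow> sat_pbc \<tau> (neg_pbc C)"
proof (cases C)
  case (PBC ts A)
  have "(\<Sum>(a,l)\<leftarrow>map (\<lambda>(a,l). (a, neg_lit l)) ts. a * lit_val \<tau> l) = (\<Sum>(a,l)\<leftarrow>ts. a) - (\<Sum>(a,l)\<leftarrow>ts. a * lit_val \<tau> l)"
    by (induction ts) (auto simp: lit_val_neg algebra_simps)
  moreover assume "\<not> sat_pbc \<tau> C"
  ultimately show ?thesis using PBC by simp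
qed

lemma mult_sum: "(\<Sum>(a,l)\<leftarrow>map (\<lambda>(a,l). (c*a,l)) ts. a * lit_val \<tau> l) = c * (\<Sum>(a,l)\<leftarrow>ts. a * lit_val \<tau> l)"
  by (induction ts) (auto simp: algebra_simps)

lemma ceil_ge: "(d::int) > 0 \<Longrightarrow> a \<le> d * (- ((- a) div d))"
proof -
  assume d: "d > 0"
  have e: "(-a) div d * d + (-a) mod d = -a" by (rule div_mult_mod_eq)
  have "(-a) mod d \<ge> 0" using d by simp
  then have "(-a) div d * d \<le> -a" using e by linarith
  then show ?thesis by (simp add: algebra_simps)
qed

lemma div_sum: "(d::int) > 0 \<Longrightarrow> (\<Sum>(a,l)\<leftarrow>ts. a * lit_val \<tau> l) \<le> d * (\<Sum>(a,l)\<leftarrow>map (\<lambda>(a,l). (- ((- a) div d), l)) ts. a * lit_val \<tau> l)"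
proof (induction ts)
  case (Cons p ts)
  obtain a l where p: "p = (a,l)" by fastforce
  have "a * lit_val \<tau> l \<le> d * (- ((- a) div d) * lit_val \<tau> l)"
    using lit_val_01[of \<tau> l] ceil_ge[OF Cons.prems, of a] by auto
  then show ?case using Cons p by (simp add: algebra_simps)
qed simp

lemma ceil_least: "(d::int) > 0 \<Longrightarrow> A \<le> d * k \<Longrightarrow> - ((- A) div d) \<le> k"
proof (rule ccontr)
  assume d: "d > 0" and A: "A \<le> d * k" and c: "\<not> - ((- A) div d) \<le> k"
  then have "(-A) div d \<le> -k - 1" by linarith
  then have "(-A) div d * d \<le> (-k - 1) * d" using d by (simp add: mult_right_mono)
  moreover have e: "(-A) div d * d + (-A) mod d = -A" by (rule div_mult_mod_eq)
  moreover have "(-A) mod d < d" using d by simp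
  moreover have "(-k - 1) * d = -(d*k) - d" by (simp add: algebra_simps)
  ultimately have "-A < -(d*k)" by linarith
  then show False using A by linarith
qed

definition lin_sum :: "('v \<Rightarrow> bool) \<Rightarrow> 'v set \<Rightarrow> 'v pbc \<Rightarrow> int" where
  "lin_sum \<tau> V C = (\<Sum>x\<in>V. lin_coeff C x * (if \<tau> x then 1 else 0))"

lemma sum_delta_mult: "finite V \<Longrightarrow> y \<in> V \<Longrightarrow> (\<Sum>x\<in>V. (if y = x then c else 0) * (g x::int)) = c * g y"
proof -
  assume f: "finite V" and y: "y \<in> V"
  have "(\<Sum>x\<in>V. (if y = x then c else 0) * g x) = (\<Sum>x\<in>V. if y = x then c * g y else 0)"
    by (rule sum.cong) auto
  also have "\<dots> = c * g y" using f y by simp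
  finally show ?thesis .
qed

lemma lin_decomp: "finite V \<Longrightarrow> var_of ` snd ` set ts \<subseteq> V \<Longrightarrow>
  (\<Sum>(a,l)\<leftarrow>ts. a * lit_val \<tau> l) = lin_sum \<tau> V (PBC ts A) + (\<Sum>(a,l)\<leftarrow>ts. (case l of Pos y \<Rightarrow> 0 | Neg y \<Rightarrow> a))"
proof (induction ts)
  case Nil then show ?case by (simp add: lin_sum_def)
next
  case (Cons p ts)
  obtain a l where p: "p = (a,l)" by fastforce
  have IH: "(\<Sum>(a,l)\<leftarrow>ts. a * lit_val \<tau> l) = lin_sum \<tau> V (PBC ts A) + (\<Sum>(a,l)\<leftarrow>ts. (case l of Pos y \<Rightarrow> 0 | Neg y \<Rightarrow> a))"
    using Cons by auto
  have v: "var_of l \<in> V" using Cons.prems p by auto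
  have ls: "lin_sum \<tau> V (PBC ((a,l)#ts) A) = lin_sum \<tau> V (PBC ts A) +
     (\<Sum>x\<in>V. (case l of Pos y \<Rightarrow> if y = x then a else 0 | Neg y \<Rightarrow> if y = x then - a else 0) * (if \<tau> x then 1 else 0))"
    by (simp add: lin_sum_def sum.distrib algebra_simps)
  have "(\<Sum>x\<in>V. (case l of Pos y \<Rightarrow> if y = x then a else 0 | Neg y \<Rightarrow> if y = x then - a else 0) * (if \<tau> x then 1 else 0))
     = (case l of Pos y \<Rightarrow> a * (if \<tau> y then 1 else 0) | Neg y \<Rightarrow> - a * (if \<tau> y then 1 else 0))"
    using v Cons.prems(1) by (cases l) (simp_all add: sum_delta_mult)
  then show ?case unfolding p using IH ls by (cases l) (auto simp: algebra_simps)
qed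

lemma sat_lin: "finite V \<Longrightarrow> vars_pbc C \<subseteq> V \<Longrightarrow> sat_pbc \<tau> C = (lin_sum \<tau> V C \<ge> lin_rhs C)"
proof (cases C)
  case (PBC ts A)
  assume "finite V" "vars_pbc C \<subseteq> V"
  then show ?thesis using lin_decomp[of V ts \<tau> A] PBC by simp linarith
qed

lemma lin_sum_cong: "lin_coeff D = lin_coeff C \<Longrightarrow> lin_sum \<tau> V D = lin_sum \<tau> V C"
  by (simp add: lin_sum_def)

lemma fin_vars: "finite (vars_pbc C)"
  by (cases C) auto

lemma cp_sound: "cp_derivable F C \<Longrightarrow> \<forall>D\<in>F. sat_pbc \<tau> D \<Longrightarrow> sat_pbc \<tau> C"
proof (induction rule: cp_derivable.induct)
  case (cp_input C) then show ?case by blast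
next
  case (cp_lit_axiom l) then show ?case using lit_val_01[of \<tau> l] by auto
next
  case (cp_add ts1 A1 ts2 A2) then show ?case by simp
next
  case (cp_mult ts A c)
  have "sat_pbc \<tau> (PBC (map (\<lambda>(a,l). (c * a, l)) ts) (c * A)) = (c * A \<le> c * (\<Sum>(a,l)\<leftarrow>ts. a * lit_val \<tau> l))"
    by (simp only: sat_pbc.simps mult_sum)
  then show ?case using cp_mult by (simp add: mult_left_mono)
next
  case (cp_div ts A d)
  then have "A \<le> d * (\<Sum>(a,l)\<leftarrow>map (\<lambda>(a,l). (- ((- a) div d), l)) ts. a * lit_val \<tau> l)"
    using div_sum[where d=d and ts=ts and \<tau>=\<tau>] by simp
  then show ?case using ceil_least cp_div by simp
next
  case (cp_normalize C D)
  let ?V = "vars_pbc C \<union> vars_pbc D"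
  have "lin_sum \<tau> ?V C \<ge> lin_rhs C" using cp_normalize sat_lin[of ?V C] fin_vars by auto
  moreover have "sat_pbc \<tau> D = (lin_sum \<tau> ?V D \<ge> lin_rhs D)" using sat_lin[of ?V D] fin_vars by auto
  ultimately show ?case using cp_normalize lin_sum_cong[of D C \<tau> ?V] by simp
qed

lemma cp_derives_sound: "F \<turnstile>cp G \<Longrightarrow> sat_formula \<tau> F \<Longrightarrow> sat_formula \<tau> G"
  unfolding cp_derives_def sat_formula_def using cp_sound by blast


lemma spec_ext:
  assumes "is_specification S as"
  shows "\<exists>\<pi>. (\<forall>x. x \<notin> set as \<longrightarrow> \<pi> x = \<pi>0 x) \<and> sat_formula \<pi> S"
proof -
  obtain \<omega>s where len: "length \<omega>s = length S" and H: "\<forall>i < length S. supp (\<omega>s ! i) \<subseteq> set as \<and>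
           (take i S @ [neg_pbc (S ! i)]) \<turnstile>cp map (\<lambda>C. restrict C (\<omega>s ! i)) (take (Suc i) S)"
    using assms unfolding is_specification_def by blast
  have "i \<le> length S \<Longrightarrow> \<exists>\<pi>. (\<forall>x. x \<notin> set as \<longrightarrow> \<pi> x = \<pi>0 x) \<and> sat_formula \<pi> (take i S)" for i
  proof (induction i)
    case 0 then show ?case by (auto simp: sat_formula_def)
  next
    case (Suc i)
    then obtain \<pi> where ag: "\<forall>x. x \<notin> set as \<longrightarrow> \<pi> x = \<pi>0 x" and st: "sat_formula \<pi> (take i S)" by auto
    have i: "i < length S" using Suc.prems by simp
    have tk: "take (Suc i) S = take i S @ [S ! i]" using i by (simp add: take_Suc_conv_app_nth)
    show ?case
    proof (cases "sat_pbc \<pi> (S ! i)")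
      case True
      then have "sat_formula \<pi> (take (Suc i) S)" using st unfolding tk by (simp add: sat_formula_def)
      then show ?thesis using ag by blast
    next
      case False
      then have "sat_pbc \<pi> (neg_pbc (S ! i))" by (rule sat_neg)
      then have "sat_formula \<pi> (take i S @ [neg_pbc (S ! i)])" using st by (simp add: sat_formula_def)
      moreover have d: "(take i S @ [neg_pbc (S ! i)]) \<turnstile>cp map (\<lambda>C. restrict C (\<omega>s ! i)) (take (Suc i) S)"
        using H i by simp
      ultimately have "sat_formula \<pi> (map (\<lambda>C. restrict C (\<omega>s ! i)) (take (Suc i) S))"
        by (rule cp_derives_sound[rotated])
      then have s2: "sat_formula (\<lambda>x. sval \<pi> ((\<omega>s ! i) x)) (take (Suc i) S)"
        unfolding sat_formula_def by (simp add: sat_restrict)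
      have sp: "supp (\<omega>s ! i) \<subseteq> set as" using H i by simp
      have "\<forall>x. x \<notin> set as \<longrightarrow> sval \<pi> ((\<omega>s ! i) x) = \<pi>0 x"
      proof (intro allI impI)
        fix x assume x: "x \<notin> set as"
        then have "x \<notin> supp (\<omega>s ! i)" using sp by blast
        then have "(\<omega>s ! i) x = SLit (Pos x)" unfolding supp_def by simp
        moreover have "\<pi> x = \<pi>0 x" using x ag by blast
        ultimately
        show "sval \<pi> ((\<omega>s ! i) x) = \<pi>0 x" by (simp add: sval_def)
      qed
      then show ?thesis using s2 by (intro exI[of _ "\<lambda>x. sval \<pi> ((\<omega>s ! i) x)"]) simp
    qed
  qed
  from this[of "length S"] show ?thesis by simp
qed

lemma subst_of_nth: "distinct keys \<Longrightarrow> length tg = length keys \<Longrightarrow> i < length keys \<Longrightarrow>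
   subst_of keys tg (keys ! i) = tg ! i"
  by (simp add: subst_of_def map_of_zip_nth)

lemma inst_sat:
  assumes "distinct keys" "list_all2 (\<lambda>k t. \<pi> k = sval \<tau> t) keys tg" "vars_formula F \<subseteq> set keys"
  shows "sat_formula \<tau> (inst F keys tg) = sat_formula \<pi> F"
proof -
  have len: "length tg = length keys" using assms(2) list_all2_lengthD by metis
  have ag: "\<forall>x\<in>set keys. sval \<tau> (subst_of keys tg x) = \<pi> x"
  proof
    fix x assume "x \<in> set keys"
    then obtain i where i: "i < length keys" "x = keys ! i" by (metis in_set_conv_nth)
    then show "sval \<tau> (subst_of keys tg x) = \<pi> x"
      using subst_of_nth[OF assms(1) len i(1)] assms(2) by (simp add: list_all2_conv_all_nth)
  qed
  have "C \<in> set F \<Longrightarrow> sat_pbc \<tau> (restrict C (subst_of keys tg)) = sat_pbc \<pi> C" for C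
    unfolding sat_restrict
    by (rule sat_vars) (use ag assms(3) in \<open>auto simp: vars_formula_def\<close>)
  then show ?thesis by (auto simp: sat_formula_def inst_def)
qed

lemma inst_vals:
  assumes "distinct keys" "list_all2 (\<lambda>k b. \<pi> k = b) keys bs" "vars_formula F \<subseteq> set keys"
  shows "sat_formula \<tau> (inst F keys (map SVal bs)) = sat_formula \<pi> F"
  by (rule inst_sat[OF assms(1) _ assms(3)]) (use assms(2) in \<open>auto simp: list_all2_conv_all_nth sval_def\<close>)

definition mk :: "'v list \<Rightarrow> bool list \<Rightarrow> 'v \<Rightarrow> bool" where
  "mk ks bs x = (case map_of (zip ks bs) x of Some b \<Rightarrow> b | None \<Rightarrow> False)"

lemma mk_nth: "distinct ks \<Longrightarrow> length ks = length bs \<Longrightarrow> list_all2 (\<lambda>k b. mk ks bs k = b) ks bs"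
  by (simp add: list_all2_conv_all_nth mk_def map_of_zip_nth)


lemma vals_map: "vals f xs = map SVal (map f xs)"
  by (simp add: vals_def)

lemma vlits_nth: "list_all2 (\<lambda>k t. \<pi> k = sval \<tau> t) ks (vlits xs) = list_all2 (\<lambda>k x. \<pi> k = \<tau> x) ks xs"
  by (auto simp: list_all2_conv_all_nth vlits_def sval_def split: if_splits)

lemma ev_append: "evaluates_true (A @ B) \<Longrightarrow> sat_formula \<tau> A \<and> sat_formula \<tau> B"
  by (auto simp: evaluates_true_def sat_formula_def)

lemma chain1: "list_all2 (\<lambda>k x. \<pi> k = f x) us ws \<Longrightarrow> list_all2 (\<lambda>k b. \<tau> k = b) xs (map f ws) \<Longrightarrow>
  list_all2 (\<lambda>k x. \<pi> k = \<tau> x) us xs"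
  by (auto simp: list_all2_conv_all_nth)

lemma chain2: "list_all2 (\<lambda>k b. \<tau> k = b) as' (map \<pi> as) \<Longrightarrow> list_all2 (\<lambda>k x. \<pi> k = \<tau> x) as as'"
  by (auto simp: list_all2_conv_all_nth)

theorem lemma2:
  fixes Ob S :: "'v formula" and us vs as :: "'v list" and n :: nat
  assumes "length us = n" and "length vs = n"
    and "distinct (us @ vs @ as)"
    and "vars_formula Ob \<union> vars_formula S \<subseteq> set us \<union> set vs \<union> set as"
    and "is_specification S as"
    and refl_deriv: "\<exists>xs as'. length xs = n \<and> length as' = length as \<and>
          distinct (xs @ as') \<and> set (xs @ as') \<inter> set (us @ vs @ as) = {} \<and>
          inst S (us @ vs @ as) (vlits (xs @ xs @ as'))
            \<turnstile>cp inst Ob (us @ vs @ as) (vlits (xs @ xs @ as'))"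
    and trans_deriv: "\<exists>xs ys zs as' bs cs.
          length xs = n \<and> length ys = n \<and> length zs = n \<and>
          length as' = length as \<and> length bs = length as \<and> length cs = length as \<and>
          distinct (xs @ ys @ zs @ as' @ bs @ cs) \<and>
          set (xs @ ys @ zs @ as' @ bs @ cs) \<inter> set (us @ vs @ as) = {} \<and>
          (inst S (us @ vs @ as) (vlits (xs @ ys @ as')) @
           inst Ob (us @ vs @ as) (vlits (xs @ ys @ as')) @
           inst S (us @ vs @ as) (vlits (ys @ zs @ bs)) @
           inst Ob (us @ vs @ as) (vlits (ys @ zs @ bs)) @
           inst S (us @ vs @ as) (vlits (xs @ zs @ cs)))
            \<turnstile>cp inst Ob (us @ vs @ as) (vlits (xs @ zs @ cs))"
  shows "\<forall>ws. length ws = n \<and> set ws \<inter> set as = {} \<longrightarrow>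
           preorder_on UNIV {(\<alpha>, \<beta>). rel_OS Ob S us vs as ws \<alpha> \<beta>}"
proof (intro allI impI)
  fix ws :: "'v list"
  assume "length ws = n \<and> set ws \<inter> set as = {}"
  then have lw: "length ws = n" by simp
  let ?keys = "us @ vs @ as"
  have dk: "distinct ?keys" by fact
  have vS: "vars_formula S \<subseteq> set ?keys" and vO: "vars_formula Ob \<subseteq> set ?keys" using assms(4) by auto
  let ?R = "rel_OS Ob S us vs as ws"
  let ?ag = "\<lambda>\<pi> \<alpha> \<beta>. list_all2 (\<lambda>k x. \<pi> k = \<alpha> x) us ws \<and> list_all2 (\<lambda>k x. \<pi> k = \<beta> x) vs ws"
  have relI: "?R \<alpha> \<beta>" if "?ag \<pi> \<alpha> \<beta>" "sat_formula \<pi> S" "sat_formula \<pi> Ob" for \<pi> \<alpha> \<beta>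
  proof -
    have L: "list_all2 (\<lambda>k b. \<pi> k = b) ?keys (map \<alpha> ws @ map \<beta> ws @ map \<pi> as)"
      using that(1) by (intro list_all2_appendI) (auto simp: list_all2_map2 list_all2_refl)
    show ?thesis unfolding rel_OS_def vals_map
      apply (rule exI[of _ \<pi>])
      using inst_vals[OF dk L vS] inst_vals[OF dk L vO] that
      by (auto simp: evaluates_true_def sat_formula_def simp del: map_map)
  qed
  have relD: "\<exists>\<pi>. ?ag \<pi> \<alpha> \<beta> \<and> sat_formula \<pi> S \<and> sat_formula \<pi> Ob" if hR: "?R \<alpha> \<beta>" for \<alpha> \<beta>
  proof -
    obtain \<rho> where ev0: "evaluates_true (inst S ?keys (vals \<alpha> ws @ vals \<beta> ws @ vals \<rho> as) @
       inst Ob ?keys (vals \<alpha> ws @ vals \<beta> ws @ vals \<rho> as))"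
      using hR unfolding rel_OS_def by blast
    have eq: "vals \<alpha> ws @ vals \<beta> ws @ vals \<rho> as = map SVal (map \<alpha> ws @ map \<beta> ws @ map \<rho> as)"
      by (simp add: vals_def)
    note ev = ev0[unfolded eq]
    let ?bs = "map \<alpha> ws @ map \<beta> ws @ map \<rho> as"
    let ?\<pi> = "mk ?keys ?bs"
    have L: "list_all2 (\<lambda>k b. ?\<pi> k = b) ?keys ?bs" by (rule mk_nth[OF dk]) (simp add: lw assms(1,2))
    then have "?ag ?\<pi> \<alpha> \<beta>" using assms(1,2) lw
      by (auto simp: list_all2_append list_all2_map2)
    moreover have "sat_formula ?\<pi> S" "sat_formula ?\<pi> Ob"
      using ev_append[OF ev] inst_vals[OF dk L vS] inst_vals[OF dk L vO] by auto
    ultimately show ?thesis by (intro exI[of _ ?\<pi>]) simp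
  qed
  have specI: "\<exists>\<pi>. ?ag \<pi> \<alpha> \<beta> \<and> sat_formula \<pi> S" for \<alpha> \<beta>
  proof -
    let ?bs = "map \<alpha> ws @ map \<beta> ws @ map \<alpha> as"
    let ?\<pi>0 = "mk ?keys ?bs"
    have L: "list_all2 (\<lambda>k b. ?\<pi>0 k = b) ?keys ?bs" by (rule mk_nth[OF dk]) (simp add: lw assms(1,2))
    then have ag0: "?ag ?\<pi>0 \<alpha> \<beta>" using assms(1,2) lw
      by (auto simp: list_all2_append list_all2_map2)
    obtain \<pi> where ag: "\<forall>x. x \<notin> set as \<longrightarrow> \<pi> x = ?\<pi>0 x" and st: "sat_formula \<pi> S"
      using spec_ext[OF assms(5)] by blast
    have "set us \<inter> set as = {}" "set vs \<inter> set as = {}" using dk by auto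
    then have "?ag \<pi> \<alpha> \<beta>" using ag0 ag
      by (auto simp: list_all2_conv_all_nth) (metis disjoint_iff nth_mem)+
    then show ?thesis using st by blast
  qed
  have refl: "?R \<alpha> \<alpha>" for \<alpha>
  proof -
    obtain \<pi> where ag: "?ag \<pi> \<alpha> \<alpha>" and st: "sat_formula \<pi> S" using specI by blast
    obtain xs as' where lx: "length xs = n" and la: "length as' = length as" and dx: "distinct (xs @ as')"
      and der: "inst S ?keys (vlits (xs @ xs @ as')) \<turnstile>cp inst Ob ?keys (vlits (xs @ xs @ as'))"
      using refl_deriv by blast
    let ?\<tau> = "mk (xs @ as') (map \<alpha> ws @ map \<pi> as)"
    have T: "list_all2 (\<lambda>k b. ?\<tau> k = b) (xs @ as') (map \<alpha> ws @ map \<pi> as)"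
      by (rule mk_nth[OF dx]) (simp add: lw lx la)
    have T': "list_all2 (\<lambda>k b. ?\<tau> k = b) xs (map \<alpha> ws)" "list_all2 (\<lambda>k b. ?\<tau> k = b) as' (map \<pi> as)"
      using T lw lx la by (simp_all add: list_all2_append)
    have L: "list_all2 (\<lambda>k t. \<pi> k = sval ?\<tau> t) ?keys (vlits (xs @ xs @ as'))"
    proof -
      have "list_all2 (\<lambda>k x. \<pi> k = ?\<tau> x) us xs" by (rule chain1[OF _ T'(1)]) (use ag in blast)
      moreover have "list_all2 (\<lambda>k x. \<pi> k = ?\<tau> x) vs xs" by (rule chain1[OF _ T'(1)]) (use ag in blast)
      moreover have "list_all2 (\<lambda>k x. \<pi> k = ?\<tau> x) as as'" by (rule chain2[OF T'(2)])
      ultimately show ?thesis unfolding vlits_nth by (intro list_all2_appendI)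
    qed
    have "sat_formula ?\<tau> (inst S ?keys (vlits (xs @ xs @ as')))" using inst_sat[OF dk L vS] st by simp
    then have "sat_formula ?\<tau> (inst Ob ?keys (vlits (xs @ xs @ as')))" by (rule cp_derives_sound[OF der])
    then have "sat_formula \<pi> Ob" using inst_sat[OF dk L vO] by simp
    then show ?thesis by (rule relI[OF ag st])
  qed
  have trans: "?R \<alpha> \<gamma>" if h1: "?R \<alpha> \<beta>" and h2: "?R \<beta> \<gamma>" for \<alpha> \<beta> \<gamma>
  proof -
    obtain \<pi>1 where ag1: "?ag \<pi>1 \<alpha> \<beta>" and s1: "sat_formula \<pi>1 S" "sat_formula \<pi>1 Ob" using relD[OF h1] by blast
    obtain \<pi>2 where ag2: "?ag \<pi>2 \<beta> \<gamma>" and s2: "sat_formula \<pi>2 S" "sat_formula \<pi>2 Ob" using relD[OF h2] by blast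
    obtain \<pi>3 where ag3: "?ag \<pi>3 \<alpha> \<gamma>" and s3: "sat_formula \<pi>3 S" using specI by blast
    obtain xs ys zs as' bs cs where lx: "length xs = n" "length ys = n" "length zs = n"
      and la: "length as' = length as" "length bs = length as" "length cs = length as"
      and dx: "distinct (xs @ ys @ zs @ as' @ bs @ cs)"
      and der: "(inst S ?keys (vlits (xs @ ys @ as')) @
           inst Ob ?keys (vlits (xs @ ys @ as')) @
           inst S ?keys (vlits (ys @ zs @ bs)) @
           inst Ob ?keys (vlits (ys @ zs @ bs)) @
           inst S ?keys (vlits (xs @ zs @ cs)))
            \<turnstile>cp inst Ob ?keys (vlits (xs @ zs @ cs))"
      using trans_deriv by blast
    let ?\<tau> = "mk (xs @ ys @ zs @ as' @ bs @ cs) (map \<alpha> ws @ map \<beta> ws @ map \<gamma> ws @ map \<pi>1 as @ map \<pi>2 as @ map \<pi>3 as)"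
    have T: "list_all2 (\<lambda>k b. ?\<tau> k = b) (xs @ ys @ zs @ as' @ bs @ cs) (map \<alpha> ws @ map \<beta> ws @ map \<gamma> ws @ map \<pi>1 as @ map \<pi>2 as @ map \<pi>3 as)"
      by (rule mk_nth[OF dx]) (simp add: lw lx la)
    then have T': "list_all2 (\<lambda>k b. ?\<tau> k = b) xs (map \<alpha> ws)" "list_all2 (\<lambda>k b. ?\<tau> k = b) ys (map \<beta> ws)"
      "list_all2 (\<lambda>k b. ?\<tau> k = b) zs (map \<gamma> ws)" "list_all2 (\<lambda>k b. ?\<tau> k = b) as' (map \<pi>1 as)"
      "list_all2 (\<lambda>k b. ?\<tau> k = b) bs (map \<pi>2 as)" "list_all2 (\<lambda>k b. ?\<tau> k = b) cs (map \<pi>3 as)"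
      using lw lx la by (simp_all add: list_all2_append)
    have L1: "list_all2 (\<lambda>k t. \<pi>1 k = sval ?\<tau> t) ?keys (vlits (xs @ ys @ as'))"
    proof -
      have "list_all2 (\<lambda>k x. \<pi>1 k = ?\<tau> x) us xs" by (rule chain1[OF _ T'(1)]) (use ag1 in blast)
      moreover have "list_all2 (\<lambda>k x. \<pi>1 k = ?\<tau> x) vs ys" by (rule chain1[OF _ T'(2)]) (use ag1 in blast)
      moreover have "list_all2 (\<lambda>k x. \<pi>1 k = ?\<tau> x) as as'" by (rule chain2[OF T'(4)])
      ultimately show ?thesis unfolding vlits_nth by (intro list_all2_appendI)
    qed
    have L2: "list_all2 (\<lambda>k t. \<pi>2 k = sval ?\<tau> t) ?keys (vlits (ys @ zs @ bs))"
    proof -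
      have "list_all2 (\<lambda>k x. \<pi>2 k = ?\<tau> x) us ys" by (rule chain1[OF _ T'(2)]) (use ag2 in blast)
      moreover have "list_all2 (\<lambda>k x. \<pi>2 k = ?\<tau> x) vs zs" by (rule chain1[OF _ T'(3)]) (use ag2 in blast)
      moreover have "list_all2 (\<lambda>k x. \<pi>2 k = ?\<tau> x) as bs" by (rule chain2[OF T'(5)])
      ultimately show ?thesis unfolding vlits_nth by (intro list_all2_appendI)
    qed
    have L3: "list_all2 (\<lambda>k t. \<pi>3 k = sval ?\<tau> t) ?keys (vlits (xs @ zs @ cs))"
    proof -
      have "list_all2 (\<lambda>k x. \<pi>3 k = ?\<tau> x) us xs" by (rule chain1[OF _ T'(1)]) (use ag3 in blast)
      moreover have "list_all2 (\<lambda>k x. \<pi>3 k = ?\<tau> x) vs zs" by (rule chain1[OF _ T'(3)]) (use ag3 in blast)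
      moreover have "list_all2 (\<lambda>k x. \<pi>3 k = ?\<tau> x) as cs" by (rule chain2[OF T'(6)])
      ultimately show ?thesis unfolding vlits_nth by (intro list_all2_appendI)
    qed
    have "sat_formula ?\<tau> (inst S ?keys (vlits (xs @ ys @ as')) @
           inst Ob ?keys (vlits (xs @ ys @ as')) @
           inst S ?keys (vlits (ys @ zs @ bs)) @
           inst Ob ?keys (vlits (ys @ zs @ bs)) @
           inst S ?keys (vlits (xs @ zs @ cs)))"
      using inst_sat[OF dk L1 vS] inst_sat[OF dk L1 vO] inst_sat[OF dk L2 vS] inst_sat[OF dk L2 vO]
        inst_sat[OF dk L3 vS] s1 s2 s3
      by (auto simp: sat_formula_def)
    then have "sat_formula ?\<tau> (inst Ob ?keys (vlits (xs @ zs @ cs)))" by (rule cp_derives_sound[OF der])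
    then have "sat_formula \<pi>3 Ob" using inst_sat[OF dk L3 vO] by simp
    then show ?thesis by (rule relI[OF ag3 s3])
  qed
  show "preorder_on UNIV {(\<alpha>, \<beta>). ?R \<alpha> \<beta>}"
    unfolding preorder_on_def refl_on_def trans_def using refl trans by blast
qed

end
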